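(* For every integer $\nu\ge0$ and every positive integer $n$, $g_\nu(n,0)\neq0$.
   Context: Falling factorial: $(x)_m=x(x-1)\cdots(x-m+1)$ for $m\ge1$, $(x)_0=1$, $(x)_m=1/(x)_{-m}$ for $m\le-1$. $$g_\nu(n,k):=\frac{(2\nu-1)\,(2\nu-2)_{\nu-1}^2}{2^{2\nu-2}}\sum_{r=0}^{\nu}(-1)^{\nu+r}\frac{2\nu-2r-1}{(2r)!\,(2\nu-2r)!}(6k+1)^{2r}\big(24n-(6k+1)^2\big)^{\nu-r}.$$ *)

theory Defs
  imports Complex_Main
begin

definition falling_fact :: "real \<Rightarrow> int \<Rightarrow> real" where
  "falling_fact x m =
     (if m \<ge> 0 then (\<Prod>i<nat m. x - of_nat i)
      else 1 / (\<Prod>i<nat (-m). x - of_nat i))"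

definition g :: "nat \<Rightarrow> int \<Rightarrow> int \<Rightarrow> real" where
  "g \<nu> n k =
     (2 * real \<nu> - 1) * (falling_fact (2 * real \<nu> - 2) (int \<nu> - 1))^2
       / (2 powi (2 * int \<nu> - 2))
     * (\<Sum>r = 0..\<nu>. (-1)^(\<nu> + r) * (2 * real \<nu> - 2 * real r - 1)
            / (fact (2 * r) * fact (2 * \<nu> - 2 * r))
            * (6 * real_of_int k + 1)^(2 * r)
            * (24 * real_of_int n - (6 * real_of_int k + 1)^2)^(\<nu> - r))"

end

theory Submission
  imports Defs
begin

definition tI :: "nat \<Rightarrow> int \<Rightarrow> nat \<Rightarrow> int" where
  "tI \<nu> m r = (-1)^(\<nu> + r) * (2 * int \<nu> - 2 * int r - 1) * int (2*\<nu> choose 2*r) * m^(\<nu> - r)"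

lemma term_eq:
  fixes n :: int
  assumes "r \<le> \<nu>"
  shows "(-1)^(\<nu> + r) * (2 * real \<nu> - 2 * real r - 1)
            / (fact (2 * r) * fact (2 * \<nu> - 2 * r))
            * (6 * real_of_int 0 + 1)^(2 * r)
            * (24 * real_of_int n - (6 * real_of_int 0 + 1)^2)^(\<nu> - r)
        = real_of_int (tI \<nu> (24*n - 1) r) / fact (2*\<nu>)"
proof -
  have le: "2*r \<le> 2*\<nu>" using assms by simp
  have b: "fact (2*\<nu>) = (fact (2*r) * fact (2*\<nu> - 2*r)) * real (2*\<nu> choose 2*r)"
    using arg_cong[OF binomial_fact_lemma[OF le], of "of_nat :: nat \<Rightarrow> real"] by (simp only: of_nat_mult of_nat_fact)
  have c: "real (2*\<nu> choose 2*r) \<noteq> 0" using le by simp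
  have f: "(fact (2*r) * fact (2*\<nu> - 2*r) :: real) \<noteq> 0" by simp
  show ?thesis
    unfolding tI_def b using c f
    by (simp add: divide_simps)
qed

lemma sum_eq:
  fixes n :: int
  shows "(\<Sum>r = 0..\<nu>. (-1)^(\<nu> + r) * (2 * real \<nu> - 2 * real r - 1)
            / (fact (2 * r) * fact (2 * \<nu> - 2 * r))
            * (6 * real_of_int 0 + 1)^(2 * r)
            * (24 * real_of_int n - (6 * real_of_int 0 + 1)^2)^(\<nu> - r))
        = real_of_int (\<Sum>r = 0..\<nu>. tI \<nu> (24*n - 1) r) / fact (2*\<nu>)"
  by (simp only: of_int_sum sum_divide_distrib, rule sum.cong, simp, rule term_eq, simp)

lemma T_ne:
  fixes m :: int
  assumes "m > 1"
  shows "(\<Sum>r = 0..\<nu>. tI \<nu> m r) \<noteq> 0"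
proof
  assume H: "(\<Sum>r = 0..\<nu>. tI \<nu> m r) = 0"
  have split: "(\<Sum>r = 0..\<nu>. tI \<nu> m r) = (\<Sum>r \<in> {0..<\<nu>}. tI \<nu> m r) + tI \<nu> m \<nu>"
    by (simp add: atLeastLessThanSuc_atLeastAtMost[symmetric])
  have last: "tI \<nu> m \<nu> = -1"
    unfolding tI_def by (simp add: mult_2[symmetric] power_mult)
  have d: "m dvd (\<Sum>r \<in> {0..<\<nu>}. tI \<nu> m r)"
  proof (rule dvd_sum)
    fix r assume "r \<in> {0..<\<nu>}"
    then have "\<nu> - r = Suc (\<nu> - r - 1)" by simp
    then show "m dvd tI \<nu> m r" unfolding tI_def by (metis dvd_mult power_Suc dvd_triv_left)
  qed
  have "m dvd 1" using d H split last by simp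
  then show False using assms by (simp add: zdvd_imp_le)
qed

theorem mainTheorem5:
  fixes \<nu> :: nat and n :: int
  assumes "n > 0"
  shows "g \<nu> n 0 \<noteq> 0"
proof -
  have a: "2 * real \<nu> - 1 \<noteq> 0"
  proof
    assume "2 * real \<nu> - 1 = 0"
    then have "real (2*\<nu>) = real (1::nat)" by simp
    then have "2*\<nu> = 1" by (simp only: of_nat_eq_iff)
    then show False by presburger
  qed
  have ff: "falling_fact (2 * real \<nu> - 2) (int \<nu> - 1) \<noteq> 0"
  proof (cases "\<nu> = 0")
    case True then show ?thesis by (simp add: falling_fact_def)
  next
    case False
    have "(\<Prod>i<nat (int \<nu> - 1). 2 * real \<nu> - 2 - real i) \<noteq> 0"
    proof (subst prod_zero_iff, simp, clarify)
      fix i assume "i < nat (int \<nu> - 1)" "2 * real \<nu> - 2 - real i = 0"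
      then show False by linarith
    qed
    then show ?thesis using False by (simp add: falling_fact_def)
  qed
  have T: "(\<Sum>r = 0..\<nu>. tI \<nu> (24*n - 1) r) \<noteq> 0"
    by (rule T_ne) (use assms in simp)
  show ?thesis
    unfolding g_def sum_eq using a ff T by (simp del: of_int_sum add: of_int_sum[symmetric])
qed

end
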